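(* Let $G=(V,E)$ be a finite graph satisfying the $CD\psi(n,-K)$ condition for some $n>0$, $K>0$, where $\psi:(0,+\infty)\to\mathbb R$ is a $C^1$ concave function with $\psi'(1)=0$. Let $\sigma\in\mathbb R$ and $c:[0,\infty)\to\mathbb R$ continuous with either ($c\ge0$, $\sigma\le1$) or ($c\le0$, $\sigma\ge1$), and let $u$ be a positive solution of $\partial_tu=\Delta u+c(t)u^\sigma$ on $V$. Fix $0<\alpha<1$. Then for all vertices and all $t>0$, $$(1-\alpha)\Gamma^\psi(u)\le\frac{n}{2(1-\alpha)t}+\frac{Kn}{2\alpha}.$$
   Context: Graphs: $G=(V,E)$ is a connected, locally finite graph; each edge $xy$ carries a weight $w_{xy}>0$ (possibly asymmetric), and $\mu:V\to(0,\infty)$ is a vertex measure; $y\sim x$ means $xy\in E$. Laplacian: $\Delta f(x)=\frac{1}{\mu(x)}\sum_{y\sim x}w_{xy}(f(y)-f(x))$. For $f:V\to(0,\infty)$: $\Delta^\psi f(x)=\Delta\big[\psi\big(\tfrac{f}{f(x)}\big)\big](x)$; $\overline\psi(s)=\psi'(1)(s-1)-(\psi(s)-\psi(1))$, $\Gamma^\psi f=\Delta^{\overline\psi}f$; $(\Omega^\psi f)(x)=\Delta\big[\psi'\big(\tfrac{f}{f(x)}\big)\tfrac{f}{f(x)}\big(\tfrac{\Delta f}{f}-\tfrac{\Delta f(x)}{f(x)}\big)\big](x)$; $2\Gamma_2^\psi(f)=\Omega^\psi f+\frac{\Delta f\,\Delta^\psi f}{f}-\frac{\Delta(f\Delta^\psi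 f)}{f}$. $CD\psi(n,K)$: for every $f:V\to(0,\infty)$ and every vertex, $\Gamma_2^\psi(f)\ge\frac1n(\Delta^\psi f)^2+K\Gamma^\psi(f)$. A positive solution $u:V\times[0,\infty)\to(0,\infty)$ is continuously differentiable in $t$; operators are applied to $u(\cdot,t)$ at each fixed time. *)

theory Defs
  imports "HOL-Analysis.Analysis"
begin

definition weighted_graph ::
  "'v set \<Rightarrow> ('v \<Rightarrow> 'v \<Rightarrow> bool) \<Rightarrow> ('v \<Rightarrow> 'v \<Rightarrow> real) \<Rightarrow> ('v \<Rightarrow> real) \<Rightarrow> bool" where
  "weighted_graph V E w mu \<longleftrightarrow>
     (\<forall>x y. E x y \<longrightarrow> x \<in> V \<and> y \<in> V) \<and>
     (\<forall>x y. E x y \<longrightarrow> E y x) \<and>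
     (\<forall>x y. E x y \<longrightarrow> w x y > 0) \<and>
     (\<forall>x\<in>V. mu x > 0) \<and>
     (\<forall>x\<in>V. \<forall>y\<in>V. (E\<^sup>*\<^sup>*) x y)"

definition lap ::
  "'v set \<Rightarrow> ('v \<Rightarrow> 'v \<Rightarrow> bool) \<Rightarrow> ('v \<Rightarrow> 'v \<Rightarrow> real) \<Rightarrow> ('v \<Rightarrow> real) \<Rightarrow> ('v \<Rightarrow> real) \<Rightarrow> 'v \<Rightarrow> real" where
  "lap V E w mu f x = (1 / mu x) * (\<Sum>y\<in>{y\<in>V. E x y}. w x y * (f y - f x))"

definition lap_psi ::
  "'v set \<Rightarrow> ('v \<Rightarrow> 'v \<Rightarrow> bool) \<Rightarrow> ('v \<Rightarrow> 'v \<Rightarrow> real) \<Rightarrow> ('v \<Rightarrow> real) \<Rightarrow> (real \<Rightarrow> real)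
     \<Rightarrow> ('v \<Rightarrow> real) \<Rightarrow> 'v \<Rightarrow> real" where
  "lap_psi V E w mu psi f x = lap V E w mu (\<lambda>y. psi (f y / f x)) x"

text \<open>\<open>\<psi>bar(s) = \<psi>'(1)(s-1) - (\<psi>(s) - \<psi>(1))\<close>, with \<open>psi'\<close> the derivative of \<open>psi\<close>.\<close>
definition psi_bar :: "(real \<Rightarrow> real) \<Rightarrow> (real \<Rightarrow> real) \<Rightarrow> real \<Rightarrow> real" where
  "psi_bar psi psi' s = psi' 1 * (s - 1) - (psi s - psi 1)"

definition Gamma_psi ::
  "'v set \<Rightarrow> ('v \<Rightarrow> 'v \<Rightarrow> bool) \<Rightarrow> ('v \<Rightarrow> 'v \<Rightarrow> real) \<Rightarrow> ('v \<Rightarrow> real) \<Rightarrow> (real \<Rightarrow> real)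
     \<Rightarrow> (real \<Rightarrow> real) \<Rightarrow> ('v \<Rightarrow> real) \<Rightarrow> 'v \<Rightarrow> real" where
  "Gamma_psi V E w mu psi psi' f x = lap_psi V E w mu (psi_bar psi psi') f x"

definition Omega_psi ::
  "'v set \<Rightarrow> ('v \<Rightarrow> 'v \<Rightarrow> bool) \<Rightarrow> ('v \<Rightarrow> 'v \<Rightarrow> real) \<Rightarrow> ('v \<Rightarrow> real) \<Rightarrow> (real \<Rightarrow> real)
     \<Rightarrow> ('v \<Rightarrow> real) \<Rightarrow> 'v \<Rightarrow> real" where
  "Omega_psi V E w mu psi' f x =
     lap V E w mu (\<lambda>y. psi' (f y / f x) * (f y / f x) *
        (lap V E w mu f y / f y - lap V E w mu f x / f x)) x"

definition Gamma2_psi ::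
  "'v set \<Rightarrow> ('v \<Rightarrow> 'v \<Rightarrow> bool) \<Rightarrow> ('v \<Rightarrow> 'v \<Rightarrow> real) \<Rightarrow> ('v \<Rightarrow> real) \<Rightarrow> (real \<Rightarrow> real)
     \<Rightarrow> (real \<Rightarrow> real) \<Rightarrow> ('v \<Rightarrow> real) \<Rightarrow> 'v \<Rightarrow> real" where
  "Gamma2_psi V E w mu psi psi' f x =
     (Omega_psi V E w mu psi' f x
      + lap V E w mu f x * lap_psi V E w mu psi f x / f x
      - lap V E w mu (\<lambda>y. f y * lap_psi V E w mu psi f y) x / f x) / 2"

definition CD_psi ::
  "'v set \<Rightarrow> ('v \<Rightarrow> 'v \<Rightarrow> bool) \<Rightarrow> ('v \<Rightarrow> 'v \<Rightarrow> real) \<Rightarrow> ('v \<Rightarrow> real) \<Rightarrow> (real \<Rightarrow> real)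
     \<Rightarrow> (real \<Rightarrow> real) \<Rightarrow> real \<Rightarrow> real \<Rightarrow> bool" where
  "CD_psi V E w mu psi psi' n K \<longleftrightarrow>
     (\<forall>f. (\<forall>y\<in>V. f y > 0) \<longrightarrow> (\<forall>x\<in>V.
        Gamma2_psi V E w mu psi psi' f x
          \<ge> (1 / n) * (lap_psi V E w mu psi f x)\<^sup>2 + K * Gamma_psi V E w mu psi psi' f x))"

end

theory Submission
  imports Defs
begin

lemma psi_tangent:
  fixes psi psi' :: "real \<Rightarrow> real"
  assumes psi_deriv: "\<And>s. s > 0 \<Longrightarrow> (psi has_real_derivative psi' s) (at s)"
    and psi_concave: "concave_on {0<..} psi"
    and cpos: "c > 0" and xpos: "x > 0"
  shows "psi x - psi c \<le> psi' c * (x - c)"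
proof -
  have cv: "convex_on {0<..} (\<lambda>x. - psi x)" using psi_concave unfolding concave_on_def .
  have d: "((\<lambda>x. - psi x) has_field_derivative - psi' c) (at c within {0<..})"
    by (rule has_field_derivative_at_within, rule DERIV_minus, rule psi_deriv[OF cpos])
  have con: "connected {0::real<..}" by (simp add: convex_connected)
  have ci: "c \<in> interior {0::real<..}" using cpos by (simp add: interior_open)
  have xi: "x \<in> {0<..}" using xpos by simp
  have "(- psi x) - (- psi c) \<ge> (- psi' c) * (x - c)"
    by (rule convex_on_imp_above_tangent[OF cv con ci xi d])
  thus ?thesis by simp
qed

lemma psi'_sign:
  fixes psi psi' :: "real \<Rightarrow> real"
  assumes psi_deriv: "\<And>s. s > 0 \<Longrightarrow> (psi has_real_derivative psi' s) (at s)"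
    and psi_concave: "concave_on {0<..} psi" and p1: "psi' 1 = 0"
    and r: "r > 0"
  shows "psi' r * (r - 1) \<le> 0"
proof -
  have a: "psi r - psi 1 \<le> psi' 1 * (r - 1)" by (rule psi_tangent[OF psi_deriv psi_concave]) (use r in auto)
  have b: "psi 1 - psi r \<le> psi' r * (1 - r)" by (rule psi_tangent[OF psi_deriv psi_concave]) (use r in auto)
  from a b p1 show ?thesis by (simp add: algebra_simps)
qed

lemma deriv_left_max:
  fixes f :: "real \<Rightarrow> real"
  assumes d: "(f has_real_derivative D) (at t within {0..})" and t: "0 < t"
    and mx: "\<forall>s\<in>{0..t}. f s \<le> f t"
  shows "D \<ge> 0"
proof -
  have lim: "((\<lambda>y. (f y - f t) / (y - t)) \<longlongrightarrow> D) (at t within {0<..<t})"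
    using d unfolding has_field_derivative_iff
    by (rule tendsto_within_subset) auto
  have nb: "at t within {0<..<t} \<noteq> bot"
    using t by (simp add: at_within_eq_bot_iff)
  have "\<And>y. y \<in> {0<..<t} \<Longrightarrow> (f y - f t) / (y - t) \<ge> 0"
  proof -
    fix y assume y: "y \<in> {0<..<t}"
    have "f y - f t \<le> 0" using mx y by auto
    moreover have "y - t < 0" using y by auto
    ultimately show "(f y - f t) / (y - t) \<ge> 0" by (rule divide_nonpos_neg)
  qed
  then have ev: "eventually (\<lambda>y. (f y - f t) / (y - t) \<ge> 0) (at t within {0<..<t})"
    by (simp add: eventually_at_filter)
  show ?thesis by (rule tendsto_lowerbound[OF lim ev nb])
qed

lemma pow_sign:
  fixes a b c \<sigma> :: real and psi psi' :: "real \<Rightarrow> real"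
  assumes psi_deriv: "\<And>s. s > 0 \<Longrightarrow> (psi has_real_derivative psi' s) (at s)"
    and psi_concave: "concave_on {0<..} psi" and p1: "psi' 1 = 0"
    and a: "a > 0" and b: "b > 0"
    and cs: "(c \<ge> 0 \<and> \<sigma> \<le> 1) \<or> (c \<le> 0 \<and> \<sigma> \<ge> 1)"
  shows "psi' (b / a) * (c * (b powr \<sigma> * a - b * a powr \<sigma>)) \<ge> 0"
proof -
  have ba: "b/a > 0" using b a by (rule divide_pos_pos)
  have sg: "psi' (b/a) * (b/a - 1) \<le> 0" by (rule psi'_sign[OF psi_deriv psi_concave p1 ba])
  have pb: "b powr \<sigma> = b * b powr (\<sigma> - 1)" using b by (simp add: powr_mult_base)
  have pa: "a powr \<sigma> = a * a powr (\<sigma> - 1)" using a by (simp add: powr_mult_base)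
  have e: "b powr \<sigma> * a - b * a powr \<sigma> = a * b * (b powr (\<sigma> - 1) - a powr (\<sigma> - 1))"
    unfolding pa pb by (simp add: algebra_simps)
  have q: "b/a - 1 = (b - a) / a" using a by (simp add: field_simps)
  have sg2: "psi' (b/a) * (b - a) \<le> 0"
  proof -
    have "psi' (b/a) * (b - a) = (psi' (b/a) * (b/a - 1)) * a" using a unfolding q by simp
    also have "\<dots> \<le> 0" using sg a by (simp add: mult_nonpos_nonneg)
    finally show ?thesis .
  qed
  have ab: "a * b > 0" using a b by simp
  show ?thesis
  proof (cases "b \<ge> a")
    case True
    have p: "psi' (b/a) \<le> 0"
    proof (cases "b = a")
      case True then show ?thesis using a p1 by simp
    next
      case False then have "b - a > 0" using \<open>b \<ge> a\<close> by simp
      then show ?thesis using sg2 by (simp add: mult_le_0_iff)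
    qed
    show ?thesis using cs
    proof
      assume h: "c \<ge> 0 \<and> \<sigma> \<le> 1"
      have "b powr (\<sigma> - 1) \<le> a powr (\<sigma> - 1)" using powr_mono2'[of "\<sigma>-1" a b] h a True by auto
      then have "a * b * (b powr (\<sigma> - 1) - a powr (\<sigma> - 1)) \<le> 0" using ab by (simp add: mult_nonneg_nonpos)
      then have "c * (a * b * (b powr (\<sigma> - 1) - a powr (\<sigma> - 1))) \<le> 0" using h by (simp add: mult_nonneg_nonpos)
      then show ?thesis unfolding e using p by (simp add: mult_nonpos_nonpos)
    next
      assume h: "c \<le> 0 \<and> \<sigma> \<ge> 1"
      have "b powr (\<sigma> - 1) \<ge> a powr (\<sigma> - 1)" using powr_mono2[of "\<sigma>-1" a b] h a True by auto
      then have "a * b * (b powr (\<sigma> - 1) - a powr (\<sigma> - 1)) \<ge> 0" using ab by simp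
      then have "c * (a * b * (b powr (\<sigma> - 1) - a powr (\<sigma> - 1))) \<le> 0" using h by (simp add: mult_nonpos_nonneg)
      then show ?thesis unfolding e using p by (simp add: mult_nonpos_nonpos)
    qed
  next
    case False
    have "b - a < 0" using False by simp
    then have p: "psi' (b/a) \<ge> 0" using sg2 by (simp add: mult_le_0_iff)
    show ?thesis using cs
    proof
      assume h: "c \<ge> 0 \<and> \<sigma> \<le> 1"
      have "b powr (\<sigma> - 1) \<ge> a powr (\<sigma> - 1)" using powr_mono2'[of "\<sigma>-1" b a] h b False by auto
      then have "a * b * (b powr (\<sigma> - 1) - a powr (\<sigma> - 1)) \<ge> 0" using ab by simp
      then have "c * (a * b * (b powr (\<sigma> - 1) - a powr (\<sigma> - 1))) \<ge> 0" using h by simp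
      then show ?thesis unfolding e using p by simp
    next
      assume h: "c \<le> 0 \<and> \<sigma> \<ge> 1"
      have "b powr (\<sigma> - 1) \<le> a powr (\<sigma> - 1)" using powr_mono2[of "\<sigma>-1" b a] h b False by auto
      then have "a * b * (b powr (\<sigma> - 1) - a powr (\<sigma> - 1)) \<le> 0" using ab by (simp add: mult_nonneg_nonpos)
      then have "c * (a * b * (b powr (\<sigma> - 1) - a powr (\<sigma> - 1))) \<ge> 0" using h by (simp add: mult_nonpos_nonpos)
      then show ?thesis unfolding e using p by simp
    qed
  qed
qed

lemma lap_const_minus:
  "lap V E w mu (\<lambda>y. a - h y) z = - lap V E w mu h z"
proof -
  have "(\<Sum>y\<in>{y\<in>V. E z y}. w z y * ((a - h y) - (a - h z)))
      = (\<Sum>y\<in>{y\<in>V. E z y}. - (w z y * (h y - h z)))"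
    by (rule sum.cong) (auto simp: algebra_simps)
  then show ?thesis unfolding lap_def by (simp add: sum_negf)
qed

lemma Gamma_eq_neg_lap_psi:
  assumes p1: "psi' 1 = 0"
  shows "Gamma_psi V E w mu psi psi' f z = - lap_psi V E w mu psi f z"
proof -
  have pb: "psi_bar psi psi' = (\<lambda>s. psi 1 - psi s)" by (rule ext) (simp add: psi_bar_def p1)
  show ?thesis unfolding Gamma_psi_def lap_psi_def pb by (rule lap_const_minus)
qed

lemma omega_bound:
  fixes V :: "'v set" and psi psi' :: "real \<Rightarrow> real" and f :: "'v \<Rightarrow> real"
  assumes graph: "weighted_graph V E w mu" and x: "x \<in> V"
    and fpos: "\<forall>y\<in>V. f y > 0" and CD: "CD_psi V E w mu psi psi' n (- K)"
    and p1: "psi' 1 = 0"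
    and mx: "\<forall>y\<in>V. Gamma_psi V E w mu psi psi' f y \<le> Gamma_psi V E w mu psi psi' f x"
  shows "Omega_psi V E w mu psi' f x \<ge> (2/n) * (Gamma_psi V E w mu psi psi' f x)\<^sup>2
           - 2 * K * Gamma_psi V E w mu psi psi' f x"
proof -
  let ?N = "{y\<in>V. E x y}"
  define L where "L = lap_psi V E w mu psi f"
  define G where "G = Gamma_psi V E w mu psi psi' f"
  have GL: "\<And>z. G z = - L z" unfolding G_def L_def by (rule Gamma_eq_neg_lap_psi[where psi'=psi', OF p1])
  have mux: "mu x > 0" using graph x unfolding weighted_graph_def by auto
  have fx: "f x > 0" using fpos x by auto
  have cd: "Gamma2_psi V E w mu psi psi' f x \<ge> (1/n) * (L x)\<^sup>2 + (- K) * G x"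
    using CD fpos x unfolding CD_psi_def L_def G_def by blast
  have eq1: "lap V E w mu f x * L x - lap V E w mu (\<lambda>y. f y * L y) x
      = (1 / mu x) * ((\<Sum>y\<in>?N. w x y * (f y - f x)) * L x - (\<Sum>y\<in>?N. w x y * (f y * L y - f x * L x)))"
    unfolding lap_def by (simp add: algebra_simps)
  have eq2: "(\<Sum>y\<in>?N. w x y * (f y - f x)) * L x - (\<Sum>y\<in>?N. w x y * (f y * L y - f x * L x))
      = (\<Sum>y\<in>?N. w x y * f y * (L x - L y))"
    unfolding sum_distrib_right sum_subtractf[symmetric]
    by (rule sum.cong) (auto simp: algebra_simps)
  have "(\<Sum>y\<in>?N. w x y * f y * (L x - L y)) \<le> 0"
  proof (rule sum_nonpos)
    fix y assume y: "y \<in> ?N"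
    have "w x y > 0" using graph y unfolding weighted_graph_def by auto
    moreover have "f y > 0" using fpos y by auto
    moreover have "L x - L y \<le> 0" using mx y GL unfolding G_def[symmetric] by force
    ultimately show "w x y * f y * (L x - L y) \<le> 0" by (simp add: mult_nonneg_nonpos)
  qed
  then have "lap V E w mu f x * L x - lap V E w mu (\<lambda>y. f y * L y) x \<le> 0"
    unfolding eq1 eq2 using mux by (simp add: divide_nonpos_pos)
  then have le0: "lap V E w mu f x * L x / f x - lap V E w mu (\<lambda>y. f y * L y) x / f x \<le> 0"
    using fx by (simp add: diff_divide_distrib[symmetric] divide_nonpos_pos)
  have g2: "2 * Gamma2_psi V E w mu psi psi' f x \<le> Omega_psi V E w mu psi' f x"
    using le0 unfolding Gamma2_psi_def L_def by simp
  have "(L x)\<^sup>2 = (G x)\<^sup>2" using GL by simp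
  then show ?thesis using g2 cd unfolding G_def[symmetric] by (simp add: algebra_simps)
qed

lemma alg_id:
  fixes P a b Ly Lx c pa pb :: real
  assumes "a \<noteq> 0" "b \<noteq> 0"
  shows "P * (((Ly + c * pb) * a - b * (Lx + c * pa)) / (a * a))
       = P * (b / a) * (Ly / b - Lx / a) + P * (c * (pb * a - b * pa)) / (a * a)"
  using assms by (simp add: field_simps)

lemma time_deriv:
  fixes V :: "'v set" and psi psi' :: "real \<Rightarrow> real" and u :: "'v \<Rightarrow> real \<Rightarrow> real"
  assumes graph: "weighted_graph V E w mu" and x: "x \<in> V" and t: "t \<ge> 0"
    and psi_deriv: "\<And>s. s > 0 \<Longrightarrow> (psi has_real_derivative psi' s) (at s)"
    and psi_concave: "concave_on {0<..} psi" and p1: "psi' 1 = 0"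
    and c_sign: "((\<forall>t\<ge>0. c t \<ge> 0) \<and> \<sigma> \<le> 1) \<or> ((\<forall>t\<ge>0. c t \<le> 0) \<and> \<sigma> \<ge> 1)"
    and u_pos: "\<And>x t. x \<in> V \<Longrightarrow> t \<ge> 0 \<Longrightarrow> u x t > 0"
    and u_eq: "\<And>x t. x \<in> V \<Longrightarrow> t \<ge> 0 \<Longrightarrow>
       ((u x) has_real_derivative
          (lap V E w mu (\<lambda>y. u y t) x + c t * (u x t) powr \<sigma>)) (at t within {0..})"
  shows "\<exists>D. ((\<lambda>s. (1 / mu x) * (\<Sum>y\<in>{y\<in>V. E x y}. w x y * (psi 1 - psi (u y s / u x s))))
              has_real_derivative D) (at t within {0..})
           \<and> D \<le> - Omega_psi V E w mu psi' (\<lambda>y. u y t) x"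
proof -
  let ?N = "{y\<in>V. E x y}"
  define f where "f = (\<lambda>y. u y t)"
  define u' where "u' = (\<lambda>z. lap V E w mu f z + c t * (u z t) powr \<sigma>)"
  define q' where "q' = (\<lambda>y. (u' y * u x t - u y t * u' x) / (u x t * u x t))"
  define h where "h = (\<lambda>y. psi' (f y / f x) * (f y / f x) *
        (lap V E w mu f y / f y - lap V E w mu f x / f x))"
  have uxp: "u x t > 0" using u_pos x t by auto
  have dterm: "((\<lambda>s. w x y * (psi 1 - psi (u y s / u x s))) has_real_derivative
       w x y * (0 - psi' (u y t / u x t) * q' y)) (at t within {0..})" if y: "y \<in> ?N" for y
  proof -
    have yV: "y \<in> V" using y by auto
    have uyp: "u y t > 0" using u_pos yV t by auto
    have dq: "((\<lambda>s. u y s / u x s) has_real_derivative q' y) (at t within {0..})"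
      unfolding q'_def u'_def f_def
      by (rule DERIV_divide[OF u_eq[OF yV t] u_eq[OF x t]]) (use uxp in simp)
    have rp: "u y t / u x t > 0" using uyp uxp by (rule divide_pos_pos)
    have dp: "((\<lambda>s. psi (u y s / u x s)) has_real_derivative psi' (u y t / u x t) * q' y) (at t within {0..})"
      by (rule DERIV_chain2[OF psi_deriv[OF rp] dq])
    show ?thesis
      by (rule DERIV_cmult, rule DERIV_diff[OF DERIV_const dp])
  qed
  define D where "D = (1 / mu x) * (\<Sum>y\<in>?N. w x y * (0 - psi' (u y t / u x t) * q' y))"
  have dH: "((\<lambda>s. (1 / mu x) * (\<Sum>y\<in>?N. w x y * (psi 1 - psi (u y s / u x s))))
              has_real_derivative D) (at t within {0..})"
    unfolding D_def by (rule DERIV_cmult, rule DERIV_sum, rule dterm)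
  have om: "Omega_psi V E w mu psi' f x = (1 / mu x) * (\<Sum>y\<in>?N. w x y * (h y - h x))"
    unfolding h_def by (simp only: Omega_psi_def lap_def)
  have hx: "h x = 0" unfolding h_def by simp
  have mux: "mu x > 0" using graph x unfolding weighted_graph_def by auto
  have tm: "w x y * (0 - psi' (u y t / u x t) * q' y) \<le> - (w x y * (h y - h x))"
    if y: "y \<in> ?N" for y
  proof -
    have yV: "y \<in> V" using y by auto
    have uyp: "u y t > 0" using u_pos yV t by auto
    have wp: "w x y > 0" using graph y unfolding weighted_graph_def by auto
    have ct: "(c t \<ge> 0 \<and> \<sigma> \<le> 1) \<or> (c t \<le> 0 \<and> \<sigma> \<ge> 1)" using c_sign t by auto
    have ps: "psi' (u y t / u x t) * (c t * (u y t powr \<sigma> * u x t - u y t * u x t powr \<sigma>)) \<ge> 0"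
      by (rule pow_sign[OF psi_deriv psi_concave p1 uxp uyp ct])
    have e: "psi' (u y t / u x t) * q' y = h y
        + psi' (u y t / u x t) * (c t * (u y t powr \<sigma> * u x t - u y t * u x t powr \<sigma>)) / (u x t * u x t)"
      unfolding q'_def u'_def h_def f_def
      by (rule alg_id) (use uxp uyp in auto)
    have "0 \<le> psi' (u y t / u x t) * (c t * (u y t powr \<sigma> * u x t - u y t * u x t powr \<sigma>)) / (u x t * u x t)"
      using ps uxp by simp
    then have "h y \<le> psi' (u y t / u x t) * q' y" unfolding e by simp
    then show ?thesis using wp hx by (simp add: mult_left_mono)
  qed
  have "(\<Sum>y\<in>?N. w x y * (0 - psi' (u y t / u x t) * q' y)) \<le> (\<Sum>y\<in>?N. - (w x y * (h y - h x)))"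
    by (rule sum_mono) (rule tm)
  also have "\<dots> = - (\<Sum>y\<in>?N. w x y * (h y - h x))" by (simp add: sum_negf)
  finally have sl: "(\<Sum>y\<in>?N. w x y * (0 - psi' (u y t / u x t) * q' y)) \<le> - (\<Sum>y\<in>?N. w x y * (h y - h x))" .
  have "D \<le> (1 / mu x) * (- (\<Sum>y\<in>?N. w x y * (h y - h x)))"
    unfolding D_def by (rule mult_left_mono[OF sl]) (use mux in simp)
  then have "D \<le> - Omega_psi V E w mu psi' f x" unfolding om by simp
  then show ?thesis using dH unfolding f_def by blast
qed

lemma final_ineq:
  fixes h T n K \<alpha> :: real
  assumes T: "T > 0" and n: "n > 0" and K: "K > 0" and a: "0 < \<alpha>" "\<alpha> < 1"
    and b: "T * h \<le> n / 2 + n * K * T"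
  shows "(1 - \<alpha>) * h \<le> n / (2 * (1 - \<alpha>) * T) + K * n / (2 * \<alpha>)"
proof -
  have h: "h \<le> n / (2 * T) + n * K" using b T by (simp add: field_simps)
  have a1: "(1 - \<alpha>) * h \<le> (1 - \<alpha>) * (n / (2 * T) + n * K)"
    by (rule mult_left_mono[OF h]) (use a in simp)
  have x0: "n / (2 * T) \<ge> 0" using n T by simp
  have "(1 - \<alpha>) * (n / (2 * T)) \<le> 1 * (n / (2 * T))"
    by (rule mult_right_mono) (use x0 a in auto)
  also have "\<dots> = n / (2 * T)" by simp
  also have "n / (2 * T) \<le> (n / (2 * T)) / (1 - \<alpha>)"
  proof -
    have "(n / (2 * T)) * (1 - \<alpha>) \<le> n / (2 * T)"
      by (rule mult_right_le_one_le) (use x0 a in auto)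
    moreover have "0 < 1 - \<alpha>" using a by simp
    ultimately show ?thesis using pos_le_divide_eq[of "1 - \<alpha>" "n / (2 * T)" "n / (2 * T)"] by simp
  qed
  also have "(n / (2 * T)) / (1 - \<alpha>) = n / (2 * (1 - \<alpha>) * T)" by (simp add: field_simps)
  finally have a2: "(1 - \<alpha>) * (n / (2 * T)) \<le> n / (2 * (1 - \<alpha>) * T)" .
  have sq: "0 \<le> (2 * \<alpha> - 1)^2" by simp
  have q: "(1 - \<alpha>) * (2 * \<alpha>) \<le> 1" using sq by (simp add: power2_eq_square algebra_simps)
  have nk: "n * K \<ge> 0" using n K by simp
  have "((1 - \<alpha>) * (n * K)) * (2 * \<alpha>) = (n * K) * ((1 - \<alpha>) * (2 * \<alpha>))" by (simp add: algebra_simps)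
  also have "\<dots> \<le> (n * K) * 1" by (rule mult_left_mono[OF q nk])
  finally have "((1 - \<alpha>) * (n * K)) * (2 * \<alpha>) \<le> K * n" by (simp add: mult.commute)
  then have a3: "(1 - \<alpha>) * (n * K) \<le> K * n / (2 * \<alpha>)"
    using pos_le_divide_eq[of "2 * \<alpha>" "(1 - \<alpha>) * (n * K)" "K * n"] a by simp
  show ?thesis using a1 a2 a3 by (simp add: algebra_simps)
qed


theorem mainTheorem12:
  fixes V :: "'v set" and E :: "'v \<Rightarrow> 'v \<Rightarrow> bool" and w :: "'v \<Rightarrow> 'v \<Rightarrow> real"
    and mu :: "'v \<Rightarrow> real" and psi psi' :: "real \<Rightarrow> real"
    and n K \<sigma> \<alpha> :: real and c :: "real \<Rightarrow> real" and u :: "'v \<Rightarrow> real \<Rightarrow> real"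
  assumes graph: "weighted_graph V E w mu" and fin: "finite V"
    and n_pos: "n > 0" and K_pos: "K > 0"
    and psi_deriv: "\<And>s. s > 0 \<Longrightarrow> (psi has_real_derivative psi' s) (at s)"
    and psi'_cont: "continuous_on {0<..} psi'"
    and psi_concave: "concave_on {0<..} psi"
    and psi'_1: "psi' 1 = 0"
    and CD: "CD_psi V E w mu psi psi' n (- K)"
    and c_cont: "continuous_on {0..} c"
    and c_sign: "((\<forall>t\<ge>0. c t \<ge> 0) \<and> \<sigma> \<le> 1) \<or> ((\<forall>t\<ge>0. c t \<le> 0) \<and> \<sigma> \<ge> 1)"
    and u_pos: "\<And>x t. x \<in> V \<Longrightarrow> t \<ge> 0 \<Longrightarrow> u x t > 0"
    and u_eq: "\<And>x t. x \<in> V \<Longrightarrow> t \<ge> 0 \<Longrightarrow>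
       ((u x) has_real_derivative
          (lap V E w mu (\<lambda>y. u y t) x + c t * (u x t) powr \<sigma>)) (at t within {0..})"
    and alpha: "0 < \<alpha>" "\<alpha> < 1"
  shows "\<forall>x\<in>V. \<forall>t>0.
     (1 - \<alpha>) * Gamma_psi V E w mu psi psi' (\<lambda>y. u y t) x
       \<le> n / (2 * (1 - \<alpha>) * t) + K * n / (2 * \<alpha>)"

proof -
  define H where "H = (\<lambda>x s. (1 / mu x) * (\<Sum>y\<in>{y\<in>V. E x y}. w x y * (psi 1 - psi (u y s / u x s))))"
  have GH: "Gamma_psi V E w mu psi psi' (\<lambda>y. u y s) x = H x s" if x: "x \<in> V" and s: "s \<ge> 0" for x s
  proof -
    have uxs: "u x s > 0" using u_pos x s by auto
    have e1: "(\<Sum>y\<in>{y\<in>V. E x y}. w x y * (psi 1 - psi (u y s / u x s)))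
        = - (\<Sum>y\<in>{y\<in>V. E x y}. w x y * (psi (u y s / u x s) - psi (u x s / u x s)))"
      using uxs by (simp add: sum_negf[symmetric] algebra_simps)
    show ?thesis
      unfolding Gamma_eq_neg_lap_psi[where psi'=psi', OF psi'_1] lap_psi_def lap_def H_def e1
      by simp
  qed
  have TD: "\<exists>D. (H x has_real_derivative D) (at s within {0..})
           \<and> D \<le> - Omega_psi V E w mu psi' (\<lambda>y. u y s) x" if x: "x \<in> V" and s: "s \<ge> 0" for x s
    unfolding H_def
    by (rule time_deriv[OF graph x s psi_deriv psi_concave psi'_1 c_sign u_pos u_eq])
  show ?thesis
  proof (intro ballI allI impI)
    fix x0 and T :: real assume x0: "x0 \<in> V" and T: "T > 0"
    define G where "G = (\<lambda>x s. s * H x s)"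
    have cont: "continuous_on {0..T} (G x)" if x: "x \<in> V" for x
      unfolding continuous_on_eq_continuous_within
    proof
      fix s assume s: "s \<in> {0..T}"
      obtain D where D: "(H x has_real_derivative D) (at s within {0..})" using TD[OF x] s by auto
      have "((\<lambda>s. s * H x s) has_real_derivative (1 * H x s + D * s)) (at s within {0..})"
        by (rule DERIV_mult[OF DERIV_ident D])
      then have "continuous (at s within {0..}) (G x)" unfolding G_def by (rule DERIV_continuous)
      then show "continuous (at s within {0..T}) (G x)" by (rule continuous_within_subset) auto
    qed
    have ex: "\<forall>x\<in>V. \<exists>t\<in>{0..T}. \<forall>s\<in>{0..T}. G x s \<le> G x t"
    proof
      fix x assume x: "x \<in> V"
      show "\<exists>t\<in>{0..T}. \<forall>s\<in>{0..T}. G x s \<le> G x t"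
        by (rule continuous_attains_sup[OF compact_Icc _ cont[OF x]]) (use T in simp)
    qed
    then obtain tm where tm: "\<forall>x\<in>V. tm x \<in> {0..T} \<and> (\<forall>s\<in>{0..T}. G x s \<le> G x (tm x))"
    proof -
      have "\<forall>x\<in>V. \<exists>t. t \<in> {0..T} \<and> (\<forall>s\<in>{0..T}. G x s \<le> G x t)" using ex by blast
      from bchoice[OF this] show ?thesis using that by blast
    qed
    define M where "M = Max ((\<lambda>x. G x (tm x)) ` V)"
    have "M \<in> (\<lambda>x. G x (tm x)) ` V" unfolding M_def by (rule Max_in) (use fin x0 in auto)
    then obtain xs where xs: "xs \<in> V" "M = G xs (tm xs)" by auto
    have maxall: "G x (tm x) \<le> M" if "x \<in> V" for x unfolding M_def by (rule Max_ge) (use fin that in auto)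
    define ts where "ts = tm xs"
    have ts: "0 \<le> ts" "ts \<le> T" using tm xs(1) unfolding ts_def by auto
    have bnd: "G x s \<le> G xs ts" if "x \<in> V" "s \<in> {0..T}" for x s
      using tm that maxall[OF that(1)] xs(2) unfolding ts_def by force
    have nkt: "0 < n / 2 + n * K * T" using n_pos K_pos T by (simp add: add_pos_pos)
    have key: "G xs ts \<le> n / 2 + n * K * T"
    proof (cases "ts > 0 \<and> H xs ts > 0")
      case False
      then have "G xs ts \<le> 0" unfolding G_def using ts
        by (cases "ts = 0") (auto simp: mult_nonneg_nonpos)
      then show ?thesis using nkt by linarith
    next
      case True
      then have tsp: "ts > 0" and Hp: "H xs ts > 0" by auto
      have sp: "\<forall>y\<in>V. Gamma_psi V E w mu psi psi' (\<lambda>z. u z ts) y \<le> Gamma_psi V E w mu psi psi' (\<lambda>z. u z ts) xs"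
      proof
        fix y assume y: "y \<in> V"
        have "ts * H y ts \<le> ts * H xs ts" using bnd[OF y] ts unfolding G_def by auto
        then have "H y ts \<le> H xs ts" using tsp by (simp add: mult_le_cancel_left_pos)
        then show "Gamma_psi V E w mu psi psi' (\<lambda>z. u z ts) y \<le> Gamma_psi V E w mu psi psi' (\<lambda>z. u z ts) xs"
          using GH[OF y ts(1)] GH[OF xs(1) ts(1)] by simp
      qed
      have fpos: "\<forall>y\<in>V. u y ts > 0" using u_pos ts(1) by auto
      have om: "Omega_psi V E w mu psi' (\<lambda>z. u z ts) xs \<ge> (2/n) * (H xs ts)\<^sup>2 - 2 * K * H xs ts"
        using omega_bound[OF graph xs(1) fpos CD psi'_1 sp] GH[OF xs(1) ts(1)] by simp
      obtain D where D: "(H xs has_real_derivative D) (at ts within {0..})"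
          "D \<le> - Omega_psi V E w mu psi' (\<lambda>y. u y ts) xs"
        using TD[OF xs(1) ts(1)] by auto
      have dG: "(G xs has_real_derivative (1 * H xs ts + D * ts)) (at ts within {0..})"
        unfolding G_def by (rule DERIV_mult[OF DERIV_ident D(1)])
      have d0: "1 * H xs ts + D * ts \<ge> 0"
        by (rule deriv_left_max[OF dG tsp]) (use bnd[OF xs(1)] ts in auto)
      define Hs where "Hs = H xs ts"
      have Dl: "D \<le> - (2/n) * Hs\<^sup>2 + 2 * K * Hs" using D(2) om unfolding Hs_def by simp
      have "ts * D \<le> ts * (- (2/n) * Hs\<^sup>2 + 2 * K * Hs)" by (rule mult_left_mono[OF Dl]) (use ts in simp)
      then have "0 \<le> Hs + ts * (- (2/n) * Hs\<^sup>2 + 2 * K * Hs)" using d0 unfolding Hs_def by (simp add: mult.commute)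
      also have "\<dots> = Hs * (1 - (2/n) * (ts * Hs) + 2 * K * ts)" by (simp add: power2_eq_square algebra_simps)
      finally have "0 \<le> 1 - (2/n) * (ts * Hs) + 2 * K * ts"
        using Hp unfolding Hs_def by (simp add: zero_le_mult_iff)
      then have l1: "(2/n) * (ts * Hs) \<le> 1 + 2 * K * ts" by simp
      have "ts * Hs = (n/2) * ((2/n) * (ts * Hs))" using n_pos by simp
      also have "\<dots> \<le> (n/2) * (1 + 2 * K * ts)" by (rule mult_left_mono[OF l1]) (use n_pos in simp)
      also have "\<dots> = n/2 + n * K * ts" by (simp add: algebra_simps)
      also have "\<dots> \<le> n/2 + n * K * T"
        using ts n_pos K_pos by (simp add: mult_left_mono)
      finally show ?thesis unfolding G_def Hs_def .
    qed
    have "T * H x0 T \<le> n / 2 + n * K * T"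
      using bnd[OF x0, of T] T key unfolding G_def by auto
    then have "(1 - \<alpha>) * H x0 T \<le> n / (2 * (1 - \<alpha>) * T) + K * n / (2 * \<alpha>)"
      by (rule final_ineq[OF T n_pos K_pos alpha])
    then show "(1 - \<alpha>) * Gamma_psi V E w mu psi psi' (\<lambda>y. u y T) x0
       \<le> n / (2 * (1 - \<alpha>) * T) + K * n / (2 * \<alpha>)"
      using GH[OF x0] T by simp
  qed
qed

end
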